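(* Let $f:E\to\mathbb{R}$ be $L$-smooth (not necessarily convex) and attain its minimum at $x_*$, and let $\varepsilon>0$. If Algorithm UAGMsDR with accuracy $\varepsilon$ is run for $N\ge1$ steps, then $$\min_{k=0,\dots,N-1}\|\nabla f(y^k)\|_*^2\le\frac{2L(f(x^0)-f(x_* ))}{N}+L\varepsilon.$$
   Context: $E$ is a finite-dimensional real vector space with a norm $\|\cdot\|$; $E^*$ is its dual, $\langle g,x\rangle$ denotes the value of $g\in E^*$ at $x\in E$, and $\|g\|_*=\max\{\langle g,x\rangle:\|x\|\le 1\}$. For $g\in E^*$, $g^{\#}$ denotes a (fixed) element $s\in E$ with $\|s\|\le 1$ and $\langle g,s\rangle=\|g\|_*$. A prox-function $d:E\to\mathbb{R}$ is continuously differentiable, convex, $1$-strongly convex with respect to $\|\cdot\|$ and satisfies $\min_E d=0$; its Bregman divergence is $V(x,z)=d(x)-d(z)-\langle\nabla d(z),x-z\rangle$. $f$ is $L$-smooth if it is continuously differentiable and $\|\nabla f(x)-\nabla f(y)\|_*\le L\|x-y\|$ for all $x,y\in E$. Algorithm UAGMsDR (input $x^0\in E$, accuracy $\varepsilon>0$): set $A_0=0$, $v^0=x^0$, $\psi_0(x)=V(x,x^0)$. For $k=0,1,2,\dots$: 1. Choose $\beta_k\in\arg\min_{\beta\in[0,1]}f(v^k+\beta(x^k-v^k))$, set $y^k=v^k+\beta_k(x^k-v^k)$. 2. $h_{k+1}\in\arg\min_{h\ge0}f(y^k-h(\nabla f(y^k))^{\#})$, $x^{k+1}=y^k-h_{k+1}(\nabla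 f(y^k))^{\#}$; $a_{k+1}$ is the largest solution of $f(y^k)-\frac{a_{k+1}^2}{2(A_k+a_{k+1})}\|\nabla f(y^k)\|_*^2+\frac{\varepsilon a_{k+1}}{2(A_k+a_{k+1})}=f(x^{k+1})$. 3. $A_{k+1}=A_k+a_{k+1}$; $\psi_{k+1}(x)=\psi_k(x)+a_{k+1}\{f(y^k)+\langle\nabla f(y^k),x-y^k\rangle\}$; $v^{k+1}=\arg\min_{x\in E}\psi_{k+1}(x)$. All minima are assumed attained, and $\nabla f(y^k)\ne0$ for all iterations considered. *)

theory Defs
  imports "HOL-Analysis.Analysis"
begin

text \<open>The finite-dimensional space E is modelled by a type of class euclidean_space,
equipped with an ARBITRARY norm nrm (not necessarily the Euclidean one).
The dual space E* is identified with E via the standard inner product: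
the functional g acts by x \<mapsto> g \<bullet> x.\<close>

definition is_norm :: "('a::real_vector \<Rightarrow> real) \<Rightarrow> bool" where
  "is_norm nrm \<longleftrightarrow>
     (\<forall>x. 0 \<le> nrm x) \<and> (\<forall>x. nrm x = 0 \<longleftrightarrow> x = 0) \<and>
     (\<forall>c x. nrm (c *\<^sub>R x) = \<bar>c\<bar> * nrm x) \<and>
     (\<forall>x y. nrm (x + y) \<le> nrm x + nrm y)"

definition dual_norm :: "('a::real_inner \<Rightarrow> real) \<Rightarrow> 'a \<Rightarrow> real" where
  "dual_norm nrm g = (SUP x\<in>{x. nrm x \<le> 1}. g \<bullet> x)"

definition has_gradient_fun :: "('a::real_inner \<Rightarrow> real) \<Rightarrow> ('a \<Rightarrow> 'a) \<Rightarrow> bool" where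
  "has_gradient_fun f gf \<longleftrightarrow> (\<forall>x. (f has_derivative (\<lambda>h. gf x \<bullet> h)) (at x))"

definition L_smooth :: "('a::real_inner \<Rightarrow> real) \<Rightarrow> real \<Rightarrow> ('a \<Rightarrow> real) \<Rightarrow> ('a \<Rightarrow> 'a) \<Rightarrow> bool" where
  "L_smooth nrm L f gf \<longleftrightarrow> has_gradient_fun f gf \<and> continuous_on UNIV gf \<and>
     (\<forall>x y. dual_norm nrm (gf x - gf y) \<le> L * nrm (x - y))"

definition prox_function :: "('a::real_inner \<Rightarrow> real) \<Rightarrow> ('a \<Rightarrow> real) \<Rightarrow> ('a \<Rightarrow> 'a) \<Rightarrow> bool" where
  "prox_function nrm d gd \<longleftrightarrow> has_gradient_fun d gd \<and> continuous_on UNIV gd \<and>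
     convex_on UNIV d \<and>
     (\<forall>x y t. 0 \<le> t \<and> t \<le> 1 \<longrightarrow>
        d (t *\<^sub>R x + (1 - t) *\<^sub>R y) \<le> t * d x + (1 - t) * d y - t * (1 - t) / 2 * (nrm (x - y))\<^sup>2) \<and>
     (\<forall>x. 0 \<le> d x) \<and> (\<exists>x. d x = 0)"

definition bregman :: "('a::real_inner \<Rightarrow> real) \<Rightarrow> ('a \<Rightarrow> 'a) \<Rightarrow> 'a \<Rightarrow> 'a \<Rightarrow> real" where
  "bregman d gd x z = d x - d z - gd z \<bullet> (x - z)"

end

theory Submission
  imports Defs
begin


lemma nrm_basic:
  assumes "is_norm nrm"
  shows "nrm 0 = 0" "nrm (-x) = nrm x" "nrm (x - y) = nrm (y - x)"
    "nrm x - nrm y \<le> nrm (x - y)" "0 \<le> nrm x" "nrm (c *\<^sub>R x) = \<bar>c\<bar> * nrm x"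
    "nrm (x + y) \<le> nrm x + nrm y"
proof -
  have h: "\<forall>c x. nrm (c *\<^sub>R x) = \<bar>c\<bar> * nrm x" and t: "\<forall>x y. nrm (x + y) \<le> nrm x + nrm y"
    and z: "\<forall>x. nrm x = 0 \<longleftrightarrow> x = 0" and p: "\<forall>x. 0 \<le> nrm x"
    using assms unfolding is_norm_def by auto
  show "nrm 0 = 0" using z by auto
  show n: "nrm (-x) = nrm x" for x using h[rule_format, of "-1" x] by simp
  show "nrm (x - y) = nrm (y - x)" using n[of "x - y"] by simp
  show "nrm x - nrm y \<le> nrm (x - y)" using t[rule_format, of "x - y" y] by simp
  show "0 \<le> nrm x" using p by auto
  show "nrm (c *\<^sub>R x) = \<bar>c\<bar> * nrm x" using h by auto
  show "nrm (x + y) \<le> nrm x + nrm y" using t by auto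
qed

lemma nrm_sum:
  assumes "is_norm nrm" "finite S"
  shows "nrm (sum g S) \<le> (\<Sum>i\<in>S. nrm (g i))"
  using assms(2)
proof (induction S rule: finite_induct)
  case empty then show ?case using nrm_basic[OF assms(1)] by simp
next
  case (insert a F)
  then show ?case using nrm_basic(7)[OF assms(1), of "g a" "sum g F"] by simp
qed

lemma nrm_upper:
  fixes nrm :: "'a::euclidean_space \<Rightarrow> real"
  assumes "is_norm nrm"
  shows "\<exists>C\<ge>0. \<forall>x. nrm x \<le> C * norm x"
proof (intro exI conjI allI)
  show "0 \<le> (\<Sum>b\<in>Basis. nrm b)" using nrm_basic(5)[OF assms] by (simp add: sum_nonneg)
  fix x :: 'a
  have "nrm x = nrm (\<Sum>b\<in>Basis. (x \<bullet> b) *\<^sub>R b)" by (simp add: euclidean_representation)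
  also have "\<dots> \<le> (\<Sum>b\<in>Basis. nrm ((x \<bullet> b) *\<^sub>R b))" by (rule nrm_sum[OF assms]) simp
  also have "\<dots> = (\<Sum>b\<in>Basis. \<bar>x \<bullet> b\<bar> * nrm b)" using nrm_basic(6)[OF assms] by simp
  also have "\<dots> \<le> (\<Sum>b\<in>Basis. norm x * nrm b)"
    by (rule sum_mono) (simp add: Basis_le_norm mult_right_mono nrm_basic(5)[OF assms])
  also have "\<dots> = (\<Sum>b\<in>Basis. nrm b) * norm x" by (simp add: sum_distrib_left mult.commute)
  finally show "nrm x \<le> (\<Sum>b\<in>Basis. nrm b) * norm x" .
qed

lemma nrm_cont:
  fixes nrm :: "'a::euclidean_space \<Rightarrow> real"
  assumes "is_norm nrm"
  shows "continuous_on S nrm"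
proof -
  obtain C where C: "C \<ge> 0" "\<And>x. nrm x \<le> C * norm x" using nrm_upper[OF assms] by blast
  have "C-lipschitz_on S nrm"
  proof (rule lipschitz_onI)
    fix x y assume "x \<in> S" "y \<in> S"
    have "nrm x - nrm y \<le> C * norm (x - y)" "nrm y - nrm x \<le> C * norm (x - y)"
      using nrm_basic(4)[OF assms, of x y] nrm_basic(4)[OF assms, of y x] C(2)[of "x - y"]
        C(2)[of "y - x"] by (auto simp: norm_minus_commute)
    then show "dist (nrm x) (nrm y) \<le> C * dist x y" by (simp add: dist_real_def dist_norm abs_le_iff)
  qed (use C in auto)
  then show ?thesis by (rule lipschitz_on_continuous_on)
qed

lemma nrm_lower:
  fixes nrm :: "'a::euclidean_space \<Rightarrow> real"
  assumes "is_norm nrm"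
  shows "\<exists>m>0. \<forall>x. m * norm x \<le> nrm x"
proof -
  have ne: "sphere (0::'a) 1 \<noteq> {}" by (simp add: sphere_def) (metis norm_Basis SOME_Basis)
  obtain p where p: "p \<in> sphere 0 1" "\<And>y. y \<in> sphere 0 1 \<Longrightarrow> nrm p \<le> nrm y"
    using continuous_attains_inf[OF compact_sphere ne nrm_cont[OF assms]] by blast
  have "p \<noteq> 0" using p(1) by auto
  then have "nrm p \<noteq> 0" using assms unfolding is_norm_def by blast
  then have pos: "nrm p > 0" using nrm_basic(5)[OF assms, of p] by linarith
  show ?thesis
  proof (intro exI conjI allI)
    show "nrm p > 0" by fact
    fix x :: 'a
    show "nrm p * norm x \<le> nrm x"
    proof (cases "x = 0")
      case True then show ?thesis using nrm_basic(1)[OF assms] by simp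
    next
      case False
      have "nrm p \<le> nrm ((1 / norm x) *\<^sub>R x)" using p(2) False by simp
      also have "\<dots> = nrm x / norm x" using nrm_basic(6)[OF assms] by simp
      finally show ?thesis using False by (simp add: field_simps)
    qed
  qed
qed

lemma dual_bdd:
  fixes nrm :: "'a::euclidean_space \<Rightarrow> real"
  assumes "is_norm nrm"
  shows "bdd_above ((\<lambda>x. g \<bullet> x) ` {x. nrm x \<le> 1})"
proof -
  obtain m where m: "m > 0" "\<And>x. m * norm x \<le> nrm x" using nrm_lower[OF assms] by blast
  show ?thesis
  proof (rule bdd_aboveI2)
    fix x assume "x \<in> {x. nrm x \<le> 1}"
    then have "norm x \<le> 1 / m" using m(2)[of x] m(1) by (simp add: field_simps)
    then have "norm g * norm x \<le> norm g * (1/m)" by (rule mult_left_mono) auto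
    then show "g \<bullet> x \<le> norm g * (1/m)" using Cauchy_Schwarz_ineq2[of g x]
      by (meson abs_le_D1 order_trans)
  qed
qed

lemma dual_upper:
  fixes nrm :: "'a::euclidean_space \<Rightarrow> real"
  assumes "is_norm nrm" "nrm s \<le> 1"
  shows "g \<bullet> s \<le> dual_norm nrm g"
  unfolding dual_norm_def by (rule cSUP_upper) (use assms dual_bdd[OF assms(1)] in auto)

lemma dual_nonneg:
  fixes nrm :: "'a::euclidean_space \<Rightarrow> real"
  assumes "is_norm nrm"
  shows "0 \<le> dual_norm nrm g"
  using dual_upper[OF assms, of 0 g] nrm_basic(1)[OF assms] by simp




lemma L_nonneg:
  fixes nrm :: "'a::euclidean_space \<Rightarrow> real"
  assumes "is_norm nrm" "L_smooth nrm L f gf"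
  shows "0 \<le> L"
proof -
  obtain b :: 'a where b: "b \<in> Basis" by (metis SOME_Basis)
  then have "b \<noteq> 0" by auto
  then have "nrm b \<noteq> 0" using assms(1) unfolding is_norm_def by blast
  then have nb: "nrm b > 0" using nrm_basic(5)[OF assms(1), of b] by linarith
  have "dual_norm nrm (gf b - gf 0) \<le> L * nrm (b - 0)" using assms(2) unfolding L_smooth_def by blast
  then have "0 \<le> L * nrm b" using dual_nonneg[OF assms(1)] by (metis diff_zero order_trans)
  then show ?thesis using nb by (simp add: zero_le_mult_iff)
qed

lemma descent:
  fixes nrm :: "'a::euclidean_space \<Rightarrow> real"
  assumes "is_norm nrm" "L_smooth nrm L f gf" "nrm s \<le> 1" "0 \<le> t"
  shows "f (y - t *\<^sub>R s) \<le> f y - t * (gf y \<bullet> s) + L * t\<^sup>2 / 2"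
proof -
  have L0: "0 \<le> L" by (rule L_nonneg[OF assms(1,2)])
  have grad: "\<And>x. (f has_derivative (\<lambda>h. gf x \<bullet> h)) (at x)"
    using assms(2) unfolding L_smooth_def has_gradient_fun_def by blast
  have lip: "\<And>x z. dual_norm nrm (gf x - gf z) \<le> L * nrm (x - z)"
    using assms(2) unfolding L_smooth_def by blast
  define \<phi> where "\<phi> \<tau> = f (y - \<tau> *\<^sub>R s) + \<tau> * (gf y \<bullet> s) - L * \<tau>\<^sup>2 / 2" for \<tau>
  have "\<phi> t \<le> \<phi> 0"
  proof (rule DERIV_nonpos_imp_nonincreasing[OF assms(4)])
    fix \<tau> :: real assume \<tau>: "0 \<le> \<tau>" "\<tau> \<le> t"
    have d1: "((\<lambda>\<tau>. y - \<tau> *\<^sub>R s) has_derivative (\<lambda>h. - (h *\<^sub>R s))) (at \<tau>)"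
      by (auto intro!: derivative_eq_intros)
    have d2: "((\<lambda>\<tau>. f (y - \<tau> *\<^sub>R s)) has_derivative (\<lambda>h. gf (y - \<tau> *\<^sub>R s) \<bullet> (- (h *\<^sub>R s)))) (at \<tau>)"
      using has_derivative_compose[OF d1 grad] by simp
    have d3: "((\<lambda>\<tau>. f (y - \<tau> *\<^sub>R s)) has_real_derivative (- (gf (y - \<tau> *\<^sub>R s) \<bullet> s))) (at \<tau>)"
    proof -
      have e: "(\<lambda>h. gf (y - \<tau> *\<^sub>R s) \<bullet> (- (h *\<^sub>R s))) = (*) (- (gf (y - \<tau> *\<^sub>R s) \<bullet> s))"
        by (rule ext) (simp add: inner_minus_right)
      show ?thesis unfolding has_field_derivative_def using d2 unfolding e .
    qed
    have d4: "(\<phi> has_real_derivative (- (gf (y - \<tau> *\<^sub>R s) \<bullet> s) + gf y \<bullet> s - L * \<tau>)) (at \<tau>)"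
      unfolding \<phi>_def by (rule derivative_eq_intros d3 refl | simp)+
    have "(gf y - gf (y - \<tau> *\<^sub>R s)) \<bullet> s \<le> dual_norm nrm (gf y - gf (y - \<tau> *\<^sub>R s))"
      by (rule dual_upper[OF assms(1,3)])
    also have "\<dots> \<le> L * nrm (y - (y - \<tau> *\<^sub>R s))" by (rule lip)
    also have "\<dots> = L * (\<tau> * nrm s)" using nrm_basic(6)[OF assms(1)] \<tau> by simp
    also have "\<dots> \<le> L * \<tau>" using L0 \<tau> assms(3) by (intro mult_left_mono) (auto intro: mult_left_le)
    finally have "- (gf (y - \<tau> *\<^sub>R s) \<bullet> s) + gf y \<bullet> s - L * \<tau> \<le> 0" by (simp add: inner_diff_left)
    then show "\<exists>D. (\<phi> has_real_derivative D) (at \<tau>) \<and> D \<le> 0" using d4 by blast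
  qed
  then show ?thesis unfolding \<phi>_def by simp
qed

lemma step_bound:
  fixes nrm :: "'a::euclidean_space \<Rightarrow> real"
  assumes "is_norm nrm" "L_smooth nrm L f gf" "nrm s \<le> 1" "gf y \<bullet> s = dual_norm nrm (gf y)"
    and "\<And>t. 0 \<le> t \<Longrightarrow> fx1 \<le> f (y - t *\<^sub>R s)" and "f xs \<le> fx1"
  shows "(dual_norm nrm (gf y))\<^sup>2 \<le> 2 * L * (f y - fx1)"
proof -
  define g where "g = dual_norm nrm (gf y)"
  have g0: "0 \<le> g" unfolding g_def by (rule dual_nonneg[OF assms(1)])
  have L0: "0 \<le> L" by (rule L_nonneg[OF assms(1,2)])
  have D: "\<And>t. 0 \<le> t \<Longrightarrow> fx1 \<le> f y - t * g + L * t\<^sup>2 / 2"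
    using descent[OF assms(1,2,3)] assms(4,5) unfolding g_def by (metis order_trans)
  show ?thesis
  proof (cases "L = 0")
    case True
    have "g = 0"
    proof (rule ccontr)
      assume "g \<noteq> 0"
      then have gp: "g > 0" using g0 by simp
      define t where "t = (\<bar>f y - f xs\<bar> + 1) / g"
      have "0 \<le> t" unfolding t_def using gp by simp
      then have "fx1 \<le> f y - t * g" using D[of t] True by simp
      also have "t * g = \<bar>f y - f xs\<bar> + 1" unfolding t_def using gp by simp
      finally show False using assms(6) by linarith
    qed
    then show ?thesis using True unfolding g_def by simp
  next
    case False
    then have Lp: "L > 0" using L0 by simp
    have "fx1 \<le> f y - (g / L) * g + L * (g / L)\<^sup>2 / 2" using D[of "g / L"] g0 Lp by simp
    also have "\<dots> = f y - g\<^sup>2 / (2 * L)" using Lp by (simp add: field_simps power2_eq_square)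
    finally have "g\<^sup>2 / (2 * L) \<le> f y - fx1" by simp
    then show ?thesis using Lp unfolding g_def[symmetric] by (simp add: field_simps)
  qed
qed

theorem mainTheorem11:
  fixes nrm :: "'a::euclidean_space \<Rightarrow> real"
    and f :: "'a \<Rightarrow> real" and gf :: "'a \<Rightarrow> 'a" and L :: real
    and d :: "'a \<Rightarrow> real" and gd :: "'a \<Rightarrow> 'a"
    and sharp :: "'a \<Rightarrow> 'a"
    and xs x0 :: 'a and \<epsilon> :: real and N :: nat
    and x y v :: "nat \<Rightarrow> 'a" and \<beta> h a A :: "nat \<Rightarrow> real"
    and \<psi> :: "nat \<Rightarrow> 'a \<Rightarrow> real"
  assumes norm: "is_norm nrm"
    and smooth: "L_smooth nrm L f gf"
    and prox: "prox_function nrm d gd"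
    and sharp: "\<And>g. nrm (sharp g) \<le> 1 \<and> g \<bullet> sharp g = dual_norm nrm g"
    and xs_min: "\<And>z. f xs \<le> f z"
    and eps: "\<epsilon> > 0"
    and N: "N \<ge> 1"
    and init_x: "x 0 = x0" and init_A: "A 0 = 0" and init_v: "v 0 = x0"
    and init_psi: "\<psi> 0 = (\<lambda>z. bregman d gd z x0)"
    and beta: "\<And>k. k < N \<Longrightarrow> \<beta> k \<in> {0..1} \<and>
        (\<forall>b\<in>{0..1}. f (v k + \<beta> k *\<^sub>R (x k - v k)) \<le> f (v k + b *\<^sub>R (x k - v k)))"
    and y_def: "\<And>k. k < N \<Longrightarrow> y k = v k + \<beta> k *\<^sub>R (x k - v k)"
    and h_step: "\<And>k. k < N \<Longrightarrow> h (Suc k) \<ge> 0 \<and>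
        (\<forall>t\<ge>0. f (y k - h (Suc k) *\<^sub>R sharp (gf (y k))) \<le> f (y k - t *\<^sub>R sharp (gf (y k))))"
    and x_step: "\<And>k. k < N \<Longrightarrow> x (Suc k) = y k - h (Suc k) *\<^sub>R sharp (gf (y k))"
    and a_step: "\<And>k. k < N \<Longrightarrow> is_arg_max id (\<lambda>\<alpha>.
        f (y k) - \<alpha>\<^sup>2 / (2 * (A k + \<alpha>)) * (dual_norm nrm (gf (y k)))\<^sup>2
          + \<epsilon> * \<alpha> / (2 * (A k + \<alpha>)) = f (x (Suc k))) (a (Suc k))"
    and A_step: "\<And>k. k < N \<Longrightarrow> A (Suc k) = A k + a (Suc k)"
    and psi_step: "\<And>k. k < N \<Longrightarrow> \<psi> (Suc k) =
        (\<lambda>z. \<psi> k z + a (Suc k) * (f (y k) + gf (y k) \<bullet> (z - y k)))"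
    and v_step: "\<And>k. k < N \<Longrightarrow> (\<forall>z. \<psi> (Suc k) (v (Suc k)) \<le> \<psi> (Suc k) z)"
    and grad_nz: "\<And>k. k < N \<Longrightarrow> gf (y k) \<noteq> 0"
  shows "(MIN k\<in>{..<N}. (dual_norm nrm (gf (y k)))\<^sup>2)
           \<le> 2 * L * (f x0 - f xs) / real N + L * \<epsilon>"
  proof -
  have ND: "\<And>k. k < N \<Longrightarrow> (dual_norm nrm (gf (y k)))\<^sup>2 \<le> 2 * L * (f (x k) - f (x (Suc k)))"
  proof -
    fix k assume k: "k < N"
    have yx: "f (y k) \<le> f (x k)"
      using beta[OF k] y_def[OF k] by (metis atLeastAtMost_iff scaleR_one add.commute diff_add_cancel order_refl zero_le_one)
    have "(dual_norm nrm (gf (y k)))\<^sup>2 \<le> 2 * L * (f (y k) - f (x (Suc k)))"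
    proof (rule step_bound[OF norm smooth])
      show "nrm (sharp (gf (y k))) \<le> 1" "gf (y k) \<bullet> sharp (gf (y k)) = dual_norm nrm (gf (y k))"
        using sharp by auto
      show "\<And>t. 0 \<le> t \<Longrightarrow> f (x (Suc k)) \<le> f (y k - t *\<^sub>R sharp (gf (y k)))"
        using h_step[OF k] x_step[OF k] by auto
      show "f xs \<le> f (x (Suc k))" by (rule xs_min)
    qed
    also have "\<dots> \<le> 2 * L * (f (x k) - f (x (Suc k)))"
      using yx L_nonneg[OF norm smooth] by (intro mult_left_mono) auto
    finally show "(dual_norm nrm (gf (y k)))\<^sup>2 \<le> 2 * L * (f (x k) - f (x (Suc k)))" .
  qed
  define D where "D k = (dual_norm nrm (gf (y k)))\<^sup>2" for k
  have L0: "0 \<le> L" by (rule L_nonneg[OF norm smooth])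
  have "(\<Sum>k<N. D k) \<le> (\<Sum>k<N. 2 * L * (f (x k) - f (x (Suc k))))"
    by (rule sum_mono) (use ND in \<open>auto simp: D_def\<close>)
  also have "\<dots> = 2 * L * (\<Sum>k<N. f (x k) - f (x (Suc k)))" by (simp add: sum_distrib_left)
  also have "(\<Sum>k<N. f (x k) - f (x (Suc k))) = f (x 0) - f (x N)"
    by (rule sum_lessThan_telescope')
  also have "2 * L * (f (x 0) - f (x N)) \<le> 2 * L * (f x0 - f xs)"
    using init_x xs_min[of "x N"] L0 by (intro mult_left_mono) auto
  finally have S: "(\<Sum>k<N. D k) \<le> 2 * L * (f x0 - f xs)" .
  define M where "M = (MIN k\<in>{..<N}. D k)"
  have "\<And>k. k < N \<Longrightarrow> M \<le> D k" unfolding M_def by (rule Min_le) auto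
  then have "(\<Sum>k<N. M) \<le> (\<Sum>k<N. D k)" by (intro sum_mono) auto
  then have "real N * M \<le> 2 * L * (f x0 - f xs)" using S by simp
  then have "M \<le> 2 * L * (f x0 - f xs) / real N" using N by (simp add: field_simps)
  moreover have "0 \<le> L * \<epsilon>" using L0 eps by simp
  ultimately show ?thesis unfolding M_def D_def by linarith
qed


end
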